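(* Let $X$ be a finite set with $|X|>1$ and let $s=s_k s_{k-1}\cdots s_1\in\mathbb F_X$ be a reduced word with $s_i\in X\cup X^{-1}$. Then for every $n\in\mathbb N$, $$P(s^{-1},n)=\bigcup_{i=0}^k B_{\frac{n-k}{2}}\, s_i\cdots s_1,$$ where for $i=0$ the product $s_i\cdots s_1$ is the empty word.
   Context: $\mathbb F_X$ is the free group on $X$ with reduced word length $|\cdot|$; for real $r$, $B_r=\{\omega\in\mathbb F_X:|\omega|\le r\}$. For $s\in\mathbb F_X$ and $n\in\mathbb N$, $P(s,n)=\{\omega\in\mathbb F_X:|\omega|+|\omega s|\le n\}$. *)

theory Defs
  imports Complex_Main
begin

text \<open>A letter is a pair (x, b): (x, False) is the generator x, (x, True) is x^{-1}.
  Elements of F_X are represented by reduced words (lists of letters, read left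
  to right), with letters from X.\<close>

type_synonym 'a letter = "'a \<times> bool"
type_synonym 'a word = "'a letter list"

definition inv_letter :: "'a letter \<Rightarrow> 'a letter" where
  "inv_letter l = (fst l, \<not> snd l)"

fun reduced :: "'a word \<Rightarrow> bool" where
  "reduced [] = True"
| "reduced [l] = True"
| "reduced (l1 # l2 # ls) = (l2 \<noteq> inv_letter l1 \<and> reduced (l2 # ls))"

fun red :: "'a word \<Rightarrow> 'a word" where
  "red [] = []"
| "red (l # ls) = (case red ls of
      [] \<Rightarrow> [l]
    | m # ms \<Rightarrow> (if m = inv_letter l then ms else l # m # ms))"

definition free_group :: "'a set \<Rightarrow> 'a word set" where
  "free_group X = {w. reduced w \<and> fst ` set w \<subseteq> X}"

definition fg_mult :: "'a word \<Rightarrow> 'a word \<Rightarrow> 'a word" where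
  "fg_mult u v = red (u @ v)"

definition fg_inv :: "'a word \<Rightarrow> 'a word" where
  "fg_inv w = rev (map inv_letter w)"

definition ball_fg :: "'a set \<Rightarrow> real \<Rightarrow> 'a word set" where
  "ball_fg X r = {w \<in> free_group X. real (length w) \<le> r}"

definition P_set :: "'a set \<Rightarrow> 'a word \<Rightarrow> nat \<Rightarrow> 'a word set" where
  "P_set X s n = {w \<in> free_group X. length w + length (fg_mult w s) \<le> n}"

definition right_translate :: "'a word set \<Rightarrow> 'a word \<Rightarrow> 'a word set" where
  "right_translate A g = (\<lambda>a. fg_mult a g) ` A"

end

theory Submission
  imports Defs
begin

definition push :: "'a letter \<Rightarrow> 'a word \<Rightarrow> 'a word" where
  "push l z = (case z of [] \<Rightarrow> [l] | m # ms \<Rightarrow> (if m = inv_letter l then ms else l # m # ms))"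

lemma red_foldr: "red xs = foldr push xs []"
  by (induction xs) (auto simp: push_def)

lemma red_append: "red (xs @ ys) = foldr push xs (red ys)"
  by (simp add: red_foldr)

lemma inv_inv[simp]: "inv_letter (inv_letter l) = l"
  by (simp add: inv_letter_def)

lemma inv_neq[simp]: "inv_letter l \<noteq> l" "l \<noteq> inv_letter l"
  by (auto simp: inv_letter_def prod_eq_iff)

lemma reduced_tl: "reduced (l # ls) \<Longrightarrow> reduced ls"
  by (cases ls) auto

lemma reduced_push: "reduced z \<Longrightarrow> reduced (push l z)"
  by (cases z) (auto simp: push_def dest: reduced_tl)

lemma reduced_foldr: "reduced z \<Longrightarrow> reduced (foldr push xs z)"
  by (induction xs) (auto intro: reduced_push)

lemma reduced_red: "reduced (red w)"
  by (simp add: red_foldr reduced_foldr)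

lemma push_cancel: "reduced y \<Longrightarrow> push l (push (inv_letter l) y) = y"
proof (cases y)
  case (Cons m ms)
  assume r: "reduced y"
  show ?thesis
  proof (cases "m = l")
    case True
    then show ?thesis using r Cons by (cases ms) (auto simp: push_def)
  next
    case False
    then show ?thesis using Cons by (auto simp: push_def)
  qed
qed (auto simp: push_def)

lemma red_reduced: "reduced w \<Longrightarrow> red w = w"
  by (induction w rule: reduced.induct) (auto simp: push_def)

lemma foldr_push_push: "reduced z \<Longrightarrow> foldr push (push l r) z = push l (foldr push r z)"
proof (cases r)
  case (Cons m ms)
  assume z: "reduced z"
  show ?thesis
  proof (cases "m = inv_letter l")
    case True
    have "reduced (foldr push ms z)" using z by (rule reduced_foldr)
    moreover have "push l r = ms" using True Cons by (simp add: push_def)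
    ultimately show ?thesis using True Cons by (simp add: push_cancel)
  next
    case False
    then show ?thesis using Cons by (simp add: push_def)
  qed
qed (simp add: push_def)

lemma red_Cons: "red (l # x) = push l (red x)"
  by (simp add: push_def)

lemma foldr_push_red: "reduced z \<Longrightarrow> foldr push (red x) z = foldr push x z"
  by (induction x) (auto simp: foldr_push_push red_Cons simp del: red.simps(2))

lemma fg_inv_Cons: "fg_inv (l # t) = fg_inv t @ [inv_letter l]"
  by (simp add: fg_inv_def)

lemma fg_inv_append: "fg_inv (p @ t) = fg_inv t @ fg_inv p"
  by (simp add: fg_inv_def)

lemma length_fg_inv[simp]: "length (fg_inv t) = length t"
  by (simp add: fg_inv_def)

lemma cancel: "reduced z \<Longrightarrow> foldr push (t @ fg_inv t) z = z"
proof (induction t arbitrary: z)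
  case Nil
  then show ?case by (simp add: fg_inv_def)
next
  case (Cons l t)
  have r: "reduced (push (inv_letter l) z)" using Cons.prems by (rule reduced_push)
  have "foldr push ((l # t) @ fg_inv (l # t)) z
      = push l (foldr push (t @ fg_inv t) (push (inv_letter l) z))"
    by (simp add: fg_inv_Cons)
  also have "\<dots> = z" using Cons.IH[OF r] Cons.prems by (simp add: push_cancel)
  finally show ?case .
qed

lemma length_push: "length (push l z) \<le> Suc (length z)"
  by (cases z) (auto simp: push_def)

lemma length_foldr: "length (foldr push xs z) \<le> length xs + length z"
proof (induction xs)
  case (Cons a xs)
  then show ?case using length_push[of a "foldr push xs z"] by simp
qed simp

lemma length_red: "length (red x) \<le> length x"
  using length_foldr[of x "[]"] by (simp add: red_foldr)

lemma set_push: "set (push l z) \<subseteq> insert l (set z)"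
  by (cases z) (auto simp: push_def)

lemma set_foldr: "set (foldr push xs z) \<subseteq> set xs \<union> set z"
proof (induction xs)
  case (Cons a xs)
  then show ?case using set_push[of a "foldr push xs z"] by auto
qed simp

lemma set_red: "set (red x) \<subseteq> set x"
  using set_foldr[of x "[]"] by (simp add: red_foldr)

lemma reduced_appendD: "reduced (xs @ ys) \<Longrightarrow> reduced xs \<and> reduced ys"
proof (induction xs rule: reduced.induct)
  case (2 l)
  then show ?case by (auto dest: reduced_tl)
next
  case (3 l1 l2 ls)
  then show ?case by auto
qed simp

lemma reduced_appendI:
  "reduced xs \<Longrightarrow> reduced ys \<Longrightarrow> (xs = [] \<or> ys = [] \<or> hd ys \<noteq> inv_letter (last xs))
   \<Longrightarrow> reduced (xs @ ys)"
proof (induction xs rule: reduced.induct)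
  case (2 l)
  then show ?case by (cases ys) auto
next
  case (3 l1 l2 ls)
  then show ?case by auto
qed simp

lemma reduced_fg_inv: "reduced w \<Longrightarrow> reduced (fg_inv w)"
proof (induction w rule: reduced.induct)
  case 1
  then show ?case by (simp add: fg_inv_def)
next
  case (2 l)
  then show ?case by (simp add: fg_inv_def)
next
  case (3 l1 l2 ls)
  have a: "reduced (fg_inv (l2 # ls))" using 3 by simp
  have "last (fg_inv (l2 # ls)) = inv_letter l2" by (simp add: fg_inv_def)
  moreover have "l2 \<noteq> inv_letter l1" using 3 by simp
  ultimately have "[inv_letter l1] = [] \<or> hd [inv_letter l1] \<noteq> inv_letter (last (fg_inv (l2 # ls)))"
    by (auto simp: inv_letter_def prod_eq_iff)
  then show ?case using reduced_appendI[OF a, of "[inv_letter l1]"]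
    by (simp add: fg_inv_Cons)
qed

lemma decomp: "\<exists>u p t. w = u @ t \<and> s = p @ t \<and> (u = [] \<or> p = [] \<or> last u \<noteq> last p)"
proof (induction w arbitrary: s rule: rev_induct)
  case Nil
  then show ?case by auto
next
  case (snoc a w)
  show ?case
  proof (cases s rule: rev_exhaust)
    case Nil
    then show ?thesis by (intro exI[of _ "w @ [a]"] exI[of _ "[]"]) auto
  next
    case (snoc s' b)
    show ?thesis
    proof (cases "a = b")
      case True
      obtain u p t where "w = u @ t" "s' = p @ t" "u = [] \<or> p = [] \<or> last u \<noteq> last p"
        using snoc.IH by blast
      then show ?thesis using snoc True
        by (intro exI[of _ u] exI[of _ p] exI[of _ "t @ [a]"]) auto
    next
      case False
      then show ?thesis using snoc
        by (intro exI[of _ "w @ [a]"] exI[of _ s] exI[of _ "[]"]) auto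
    qed
  qed
qed

theorem lemma3p4:
  fixes X :: "'a set" and s :: "'a word" and n :: nat
  assumes "finite X" and "card X > 1"
    and "s \<in> free_group X"
  shows "P_set X (fg_inv s) n =
    (\<Union>i \<in> {0..length s}.
       right_translate (ball_fg X ((real n - real (length s)) / 2)) (drop (length s - i) s))"
proof -
  let ?R = "(\<Union>i \<in> {0..length s}.
       right_translate (ball_fg X ((real n - real (length s)) / 2)) (drop (length s - i) s))"
  have rs: "reduced s" and Xs: "fst ` set s \<subseteq> X" using assms(3) by (auto simp: free_group_def)
  have A: "P_set X (fg_inv s) n \<subseteq> ?R"
  proof
    fix w assume "w \<in> P_set X (fg_inv s) n"
    then have rw: "reduced w" and Xw: "fst ` set w \<subseteq> X"
      and len: "length w + length (fg_mult w (fg_inv s)) \<le> n"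
      by (auto simp: P_set_def free_group_def)
    obtain u p t where w: "w = u @ t" and s: "s = p @ t" and c: "u = [] \<or> p = [] \<or> last u \<noteq> last p"
      using decomp by blast
    have ru: "reduced u" using rw w reduced_appendD by blast
    have rp: "reduced p" using rs s reduced_appendD by blast
    have rip: "reduced (fg_inv p)" using rp by (rule reduced_fg_inv)
    have "u = [] \<or> fg_inv p = [] \<or> hd (fg_inv p) \<noteq> inv_letter (last u)"
    proof (cases "u = [] \<or> p = []")
      case False
      then have "hd (fg_inv p) = inv_letter (last p)"
        by (simp add: fg_inv_def hd_rev last_map)
      then show ?thesis using c using False by (auto simp: inv_letter_def prod_eq_iff)
    qed (auto simp: fg_inv_def)
    then have rup: "reduced (u @ fg_inv p)" using reduced_appendI[OF ru rip] by auto
    have "fg_mult w (fg_inv s) = red (u @ (t @ fg_inv t) @ fg_inv p)"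
      by (simp add: fg_mult_def w s fg_inv_append)
    also have "\<dots> = foldr push u (foldr push (t @ fg_inv t) (red (fg_inv p)))"
      by (simp add: red_append del: append_assoc)
    also have "\<dots> = foldr push u (red (fg_inv p))"
      by (simp only: cancel[OF reduced_red])
    also have "\<dots> = red (u @ fg_inv p)" by (simp add: red_append)
    also have "\<dots> = u @ fg_inv p" using rup by (rule red_reduced)
    finally have "length (fg_mult w (fg_inv s)) = length u + length p" by simp
    then have "2 * length u + length s \<le> n" using len w s by simp
    then have ub: "real (length u) \<le> (real n - real (length s)) / 2" by simp
    have "u \<in> ball_fg X ((real n - real (length s)) / 2)"
      using ru Xw w ub by (auto simp: ball_fg_def free_group_def)
    moreover have "w = fg_mult u t" using rw w by (simp add: fg_mult_def red_reduced)
    moreover have "drop (length s - length t) s = t" using s by simp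
    moreover have "length t \<in> {0..length s}" using s by simp
    ultimately show "w \<in> ?R" unfolding right_translate_def by force
  qed
  have B: "?R \<subseteq> P_set X (fg_inv s) n"
  proof
    fix w assume "w \<in> ?R"
    then obtain i u where i: "i \<le> length s" and u: "u \<in> ball_fg X ((real n - real (length s)) / 2)"
      and w: "w = red (u @ drop (length s - i) s)"
      by (auto simp: right_translate_def fg_mult_def)
    define t where "t = drop (length s - i) s"
    define p where "p = take (length s - i) s"
    have s: "s = p @ t" by (simp add: p_def t_def)
    have lt: "length t = i" using i by (simp add: t_def)
    have ru: "reduced u" and Xu: "fst ` set u \<subseteq> X"
      and ub: "real (length u) \<le> (real n - real (length s)) / 2"
      using u by (auto simp: ball_fg_def free_group_def)
    have Xt: "fst ` set t \<subseteq> X" using Xs s by auto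
    have "set w \<subseteq> set u \<union> set t" using set_red[of "u @ t"] w t_def by auto
    then have "fst ` set w \<subseteq> X" using Xu Xt by blast
    then have wf: "w \<in> free_group X" using w reduced_red
      by (simp add: free_group_def)
    have lw: "length w \<le> length u + i" using length_red[of "u @ t"] w t_def lt by simp
    have "fg_mult w (fg_inv s) = red (red (u @ t) @ (fg_inv t @ fg_inv p))"
      unfolding fg_mult_def w t_def[symmetric] using s by (simp only: fg_inv_append)
    also have "\<dots> = foldr push (u @ t) (red (fg_inv t @ fg_inv p))"
      by (simp only: red_append[of "red (u @ t)"] foldr_push_red[OF reduced_red])
    also have "\<dots> = red ((u @ t) @ (fg_inv t @ fg_inv p))"
      by (simp only: red_append)
    also have "\<dots> = red (u @ (t @ fg_inv t) @ fg_inv p)" by simp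
    also have "\<dots> = foldr push u (foldr push (t @ fg_inv t) (red (fg_inv p)))"
      by (simp only: red_append foldr_append)
    also have "\<dots> = foldr push u (red (fg_inv p))"
      by (simp only: cancel[OF reduced_red])
    also have "\<dots> = red (u @ fg_inv p)" by (simp add: red_append)
    finally have "length (fg_mult w (fg_inv s)) \<le> length u + length p"
      using length_red[of "u @ fg_inv p"] by simp
    moreover have "length p + i = length s" using s lt by simp
    ultimately have "length w + length (fg_mult w (fg_inv s)) \<le> 2 * length u + length s"
      using lw by simp
    also have "\<dots> \<le> n"
    proof -
      have "real (2 * length u + length s) \<le> real n" using ub by simp
      then show ?thesis by linarith
    qed
    finally show "w \<in> P_set X (fg_inv s) n" using wf by (simp add: P_set_def)
  qed
  show ?thesis using A B by blast
qed

end
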